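(* Let $\kappa>-1$ and $\Gamma$ a constant real $n\times r$ matrix. For a curve $(X(t),P(t))$ in $T^*V(n,r)$ set $\Phi=PX^T-XP^T\in so(n)$ and $\Psi=X^TP-P^TX\in so(r)$. Then the system $$\dot X=P-(1+2\kappa)XP^TX,\qquad \dot P=(1+2\kappa)PX^TP-\Gamma+X\Lambda,\qquad \Lambda=\tfrac12\left(-2P^TP+X^T\Gamma+\Gamma^TX\right)$$ is equivalent to the system $$\dot X=\Phi X+\kappa X\Psi,\qquad \dot\Phi=X\Gamma^T-\Gamma X^T,\qquad \dot\Psi=\Gamma^TX-X^T\Gamma.$$
   Context: $V(n,r)=\{X\in M_{n,r}(\mathbb R):X^TX=\mathbf I_r\}$, and $T^*V(n,r)$ is realized as the set of pairs $(X,P)$ of real $n\times r$ matrices with $X^TX=\mathbf I_r$, $X^TP+P^TX=0$. The first system is the Hamiltonian flow of $H=\frac12\operatorname{tr}(P^TP)-\frac{1+2\kappa}{2}\operatorname{tr}((XP^T)^2)+\operatorname{tr}(X^T\Gamma)$ on $T^*V(n,r)$; $\Phi$ and $\Psi$ are the momentum mappings of the left $SO(n)$- and right $SO(r)$-actions. *)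

theory Defs
  imports "HOL-Analysis.Analysis"
begin

(* Real n x r matrices are rendered as real^r^n (rows indexed by n). *)

definition in_cotangent_stiefel :: "real^'r^'n \<Rightarrow> real^'r^'n \<Rightarrow> bool" where
  "in_cotangent_stiefel X P \<longleftrightarrow>
     transpose X ** X = mat 1 \<and> transpose X ** P + transpose P ** X = 0"

definition Phi_map :: "real^'r^'n \<Rightarrow> real^'r^'n \<Rightarrow> real^'n^'n" where
  "Phi_map X P = P ** transpose X - X ** transpose P"

definition Psi_map :: "real^'r^'n \<Rightarrow> real^'r^'n \<Rightarrow> real^'r^'r" where
  "Psi_map X P = transpose X ** P - transpose P ** X"

end

theory Submission
  imports Defs
begin


lemma mm_rdistrib: "((A::'a::semiring_1^'n^'m) + B) ** C = A ** C + B ** C"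
  by (vector matrix_matrix_mult_def sum.distrib[symmetric] field_simps)
lemma mm_sub_ldistrib: "(A::'a::ring_1^'n^'m) ** (B - C) = A ** B - A ** C"
  by (vector matrix_matrix_mult_def sum_subtractf[symmetric] field_simps)
lemma mm_sub_rdistrib: "((A::'a::ring_1^'n^'m) - B) ** C = A ** C - B ** C"
  by (vector matrix_matrix_mult_def sum_subtractf[symmetric] field_simps)
lemma mm_neg_left: "(- (A::'a::ring_1^'n^'m)) ** C = - (A ** C)"
  by (vector matrix_matrix_mult_def sum_negf[symmetric])
lemma mm_neg_right: "(A::'a::ring_1^'n^'m) ** (- C) = - (A ** C)"
  by (vector matrix_matrix_mult_def sum_negf[symmetric])
lemma tr_add: "transpose (A + B) = transpose A + transpose (B::'a::semiring_1^'n^'m)"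
  by (vector transpose_def)
lemma tr_sub: "transpose (A - B) = transpose A - transpose (B::'a::ring_1^'n^'m)"
  by (vector transpose_def)
lemma tr_neg: "transpose (- A) = - transpose (A::'a::ring_1^'n^'m)"
  by (vector transpose_def)
lemma tr_zero: "transpose (0::'a::semiring_1^'n^'m) = 0"
  by (vector transpose_def)

lemma bb_mm: "bounded_bilinear (\<lambda>(A::real^'n^'m) (B::real^'p^'n). A ** B)"
  unfolding bilinear_conv_bounded_bilinear[symmetric] bilinear_def
  by (auto intro!: linearI simp: matrix_add_ldistrib mm_rdistrib matrix_scalar_ac scalar_matrix_assoc)

lemma bl_tr: "bounded_linear (transpose :: real^'n^'m \<Rightarrow> real^'m^'n)"
  unfolding linear_conv_bounded_linear[symmetric]
  by (auto intro!: linearI simp: tr_add transpose_scalar)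

lemma der_mm: "(f has_vector_derivative f') (at x) \<Longrightarrow> (g has_vector_derivative g') (at x) \<Longrightarrow>
   ((\<lambda>s. (f s :: real^'n^'m) ** (g s :: real^'p^'n)) has_vector_derivative (f x ** g' + f' ** g x)) (at x)"
  by (rule bounded_bilinear.has_vector_derivative[OF bb_mm])

lemma der_tr: "(f has_vector_derivative f') (at x) \<Longrightarrow>
   ((\<lambda>s. transpose (f s :: real^'n^'m)) has_vector_derivative transpose f') (at x)"
  by (rule bounded_linear.has_vector_derivative[OF bl_tr])


lemma num_sc: "(numeral w :: 'a::real_algebra_1) * x = numeral w *\<^sub>R x"
  by (simp add: scaleR_conv_of_real)

lemmas mmn = num_sc matrix_add_ldistrib mm_rdistrib mm_sub_ldistrib mm_sub_rdistrib mm_neg_left mm_neg_right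
  tr_add tr_sub tr_neg tr_zero transpose_scalar matrix_transpose_mul transpose_transpose
  scalar_matrix_assoc[symmetric] matrix_scalar_ac matrix_mul_assoc scaleR_right_diff_distrib scaleR_right_distrib

lemma fwd:
  fixes X P A B G :: "real^'r^'n" and c k :: real
  assumes h1: "transpose X ** X = mat 1" and h2: "transpose X ** P + transpose P ** X = 0"
    and c: "c = 1 + 2 * k"
    and eA: "A = P - c *\<^sub>R (X ** transpose P ** X)"
    and eB: "B = c *\<^sub>R (P ** transpose X ** P) - G
                + X ** ((1/2) *\<^sub>R (- 2 *\<^sub>R (transpose P ** P)
                     + transpose X ** G + transpose G ** X))"
  shows "A = Phi_map X P ** X + k *\<^sub>R (X ** Psi_map X P)"
    "B ** transpose X + P ** transpose A - A ** transpose P - X ** transpose B = X ** transpose G - G ** transpose X"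
    "transpose A ** P + transpose X ** B - transpose B ** X - transpose P ** A = transpose G ** X - transpose X ** G"
proof -
  have q1: "\<And>Y::real^'r^'q. Y ** transpose X ** X = Y" by (metis h1 matrix_mul_assoc matrix_mul_rid)
  have q1': "transpose X ** X = mat 1" by (rule h1)
  have h2': "transpose X ** P = - (transpose P ** X)" using h2 by (simp add: eq_neg_iff_add_eq_0)
  have q2: "\<And>Y::real^'r^'q. Y ** transpose X ** P = - (Y ** transpose P ** X)"
    by (metis h2' matrix_mul_assoc mm_neg_right)
  show "A = Phi_map X P ** X + k *\<^sub>R (X ** Psi_map X P)"
    unfolding eA c Phi_map_def Psi_map_def
    by (simp add: mmn q1 q1' q2 h2' algebra_simps)
  show "B ** transpose X + P ** transpose A - A ** transpose P - X ** transpose B = X ** transpose G - G ** transpose X"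
    unfolding eA eB
    by (simp add: mmn q1 q1' q2 h2' algebra_simps)
  show "transpose A ** P + transpose X ** B - transpose B ** X - transpose P ** A = transpose G ** X - transpose X ** G"
    unfolding eA eB
    by (simp add: mmn q1 q1' q2 h2' algebra_simps)
qed


lemma bwd:
  fixes X P A B G :: "real^'r^'n" and c k :: real
  assumes h1: "transpose X ** X = mat 1" and h2: "transpose X ** P + transpose P ** X = 0"
    and h4: "transpose A ** P + transpose X ** B + transpose B ** X + transpose P ** A = 0"
    and c: "c = 1 + 2 * k"
    and eA: "A = Phi_map X P ** X + k *\<^sub>R (X ** Psi_map X P)"
    and ePhi: "B ** transpose X + P ** transpose A - A ** transpose P - X ** transpose B = X ** transpose G - G ** transpose X"
    and ePsi: "transpose A ** P + transpose X ** B - transpose B ** X - transpose P ** A = transpose G ** X - transpose X ** G"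
  shows "A = P - c *\<^sub>R (X ** transpose P ** X)"
    "B = c *\<^sub>R (P ** transpose X ** P) - G
                + X ** ((1/2) *\<^sub>R (- 2 *\<^sub>R (transpose P ** P)
                     + transpose X ** G + transpose G ** X))"
proof -
  have q1: "\<And>Y::real^'r^'q. Y ** transpose X ** X = Y" by (metis h1 matrix_mul_assoc matrix_mul_rid)
  have q1': "transpose X ** X = mat 1" by (rule h1)
  have h2': "transpose X ** P = - (transpose P ** X)" using h2 by (simp add: eq_neg_iff_add_eq_0)
  have q2: "\<And>Y::real^'r^'q. Y ** transpose X ** P = - (Y ** transpose P ** X)"
    by (metis h2' matrix_mul_assoc mm_neg_right)
  show eA': "A = P - c *\<^sub>R (X ** transpose P ** X)"
    unfolding eA c Phi_map_def Psi_map_def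
    by (simp add: mmn q1 q1' q2 h2' algebra_simps)
  have "2 *\<^sub>R (transpose X ** B) = (transpose G ** X - transpose X ** G) - 2 *\<^sub>R (transpose A ** P)"
  proof -
    have "2 *\<^sub>R (transpose X ** B) = (transpose A ** P + transpose X ** B - transpose B ** X - transpose P ** A)
       + (transpose A ** P + transpose X ** B + transpose B ** X + transpose P ** A) - 2 *\<^sub>R (transpose A ** P)"
      by (simp add: algebra_simps scaleR_2)
    then show ?thesis using ePsi h4 by simp
  qed
  then have "(1/2) *\<^sub>R (2 *\<^sub>R (transpose X ** B)) = (1/2) *\<^sub>R ((transpose G ** X - transpose X ** G) - 2 *\<^sub>R (transpose A ** P))"
    by simp
  then have eXB: "transpose X ** B = (1/2) *\<^sub>R (transpose G ** X - transpose X ** G) - transpose A ** P"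
    by (simp only: scaleR_scaleR scaleR_right_diff_distrib) simp
  have eBX: "transpose B ** X = (1/2) *\<^sub>R (transpose X ** G - transpose G ** X) - transpose P ** A"
    using arg_cong[OF eXB, of transpose]
    by (simp add: mmn)
  have q3: "\<And>Y::real^'r^'q. Y ** transpose B ** X = Y ** ((1/2) *\<^sub>R (transpose X ** G - transpose G ** X) - transpose P ** A)"
    by (metis eBX matrix_mul_assoc)
  have eBXt: "B ** transpose X = X ** transpose G - G ** transpose X - P ** transpose A + A ** transpose P + X ** transpose B"
    using ePhi by (simp add: algebra_simps)
  have "B = (B ** transpose X) ** X" by (simp add: q1)
  also have "\<dots> = (X ** transpose G - G ** transpose X - P ** transpose A + A ** transpose P + X ** transpose B) ** X"
    by (simp add: eBXt)
  also have "\<dots> = c *\<^sub>R (P ** transpose X ** P) - G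
                + X ** ((1/2) *\<^sub>R (- 2 *\<^sub>R (transpose P ** P)
                     + transpose X ** G + transpose G ** X))"
    unfolding mmn q3 unfolding eA'
    by (simp add: mmn q1 q1' q2 h2' algebra_simps)
  finally show "B = c *\<^sub>R (P ** transpose X ** P) - G
                + X ** ((1/2) *\<^sub>R (- 2 *\<^sub>R (transpose P ** P)
                     + transpose X ** G + transpose G ** X))" .
qed


lemma hvd_iff2: "(f has_vector_derivative D) (at t) \<Longrightarrow>
   (f has_vector_derivative V) (at t) \<longleftrightarrow> D = V"
  by (metis has_vector_derivative_eq_rhs vector_derivative_unique_at)

lemma hvd_iff: "f differentiable (at t) \<Longrightarrow>
   (f has_vector_derivative V) (at t) \<longleftrightarrow> V = vector_derivative f (at t)"
  using vector_derivative_works vector_derivative_unique_at by blast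

theorem lemma3:
  fixes \<kappa> :: real and \<Gamma> :: "real^'r^'n" and I :: "real set"
    and X P :: "real \<Rightarrow> real^'r^'n"
  assumes kappa: "\<kappa> > -1"
    and I_open: "open I"
    and curve: "\<And>t. t \<in> I \<Longrightarrow> in_cotangent_stiefel (X t) (P t)"
    and X_diff: "\<And>t. t \<in> I \<Longrightarrow> X differentiable (at t)"
    and P_diff: "\<And>t. t \<in> I \<Longrightarrow> P differentiable (at t)"
  shows "(\<forall>t\<in>I.
            (X has_vector_derivative
               (P t - (1 + 2 * \<kappa>) *\<^sub>R (X t ** transpose (P t) ** X t))) (at t) \<and>
            (P has_vector_derivative
               ((1 + 2 * \<kappa>) *\<^sub>R (P t ** transpose (X t) ** P t) - \<Gamma>
                + X t ** ((1/2) *\<^sub>R (- 2 *\<^sub>R (transpose (P t) ** P t)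
                     + transpose (X t) ** \<Gamma> + transpose \<Gamma> ** X t)))) (at t))
      \<longleftrightarrow>
         (\<forall>t\<in>I.
            (X has_vector_derivative
               (Phi_map (X t) (P t) ** X t + \<kappa> *\<^sub>R (X t ** Psi_map (X t) (P t)))) (at t) \<and>
            ((\<lambda>s. Phi_map (X s) (P s)) has_vector_derivative
               (X t ** transpose \<Gamma> - \<Gamma> ** transpose (X t))) (at t) \<and>
            ((\<lambda>s. Psi_map (X s) (P s)) has_vector_derivative
               (transpose \<Gamma> ** X t - transpose (X t) ** \<Gamma>)) (at t))"
proof -
  define c where "c = 1 + 2 * \<kappa>"
  have pt: "(L \<longleftrightarrow> R)" if t: "t \<in> I" and
     L: "L = ((X has_vector_derivative
               (P t - (1 + 2 * \<kappa>) *\<^sub>R (X t ** transpose (P t) ** X t))) (at t) \<and>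
            (P has_vector_derivative
               ((1 + 2 * \<kappa>) *\<^sub>R (P t ** transpose (X t) ** P t) - \<Gamma>
                + X t ** ((1/2) *\<^sub>R (- 2 *\<^sub>R (transpose (P t) ** P t)
                     + transpose (X t) ** \<Gamma> + transpose \<Gamma> ** X t)))) (at t))"
     and R: "R = ((X has_vector_derivative
               (Phi_map (X t) (P t) ** X t + \<kappa> *\<^sub>R (X t ** Psi_map (X t) (P t)))) (at t) \<and>
            ((\<lambda>s. Phi_map (X s) (P s)) has_vector_derivative
               (X t ** transpose \<Gamma> - \<Gamma> ** transpose (X t))) (at t) \<and>
            ((\<lambda>s. Psi_map (X s) (P s)) has_vector_derivative
               (transpose \<Gamma> ** X t - transpose (X t) ** \<Gamma>)) (at t))"
    for t L R
  proof -
    define A where "A = vector_derivative X (at t)"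
    define B where "B = vector_derivative P (at t)"
    have dX: "(X has_vector_derivative A) (at t)"
      unfolding A_def using X_diff[OF t] vector_derivative_works by blast
    have dP: "(P has_vector_derivative B) (at t)"
      unfolding B_def using P_diff[OF t] vector_derivative_works by blast
    have h1: "transpose (X t) ** X t = mat 1" and h2: "transpose (X t) ** P t + transpose (P t) ** X t = 0"
      using curve[OF t] unfolding in_cotangent_stiefel_def by auto
    have dC: "((\<lambda>s. transpose (X s) ** P s + transpose (P s) ** X s) has_vector_derivative
       (transpose (X t) ** B + transpose A ** P t + (transpose (P t) ** A + transpose B ** X t))) (at t)"
      by (intro has_vector_derivative_add der_mm der_tr dX dP)
    have dC0: "((\<lambda>s. transpose (X s) ** P s + transpose (P s) ** X s) has_vector_derivative 0) (at t)"
      by (rule has_vector_derivative_transform_within_open[OF has_vector_derivative_const I_open t])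
         (use curve in \<open>auto simp: in_cotangent_stiefel_def\<close>)
    have h4: "transpose A ** P t + transpose (X t) ** B + transpose B ** X t + transpose (P t) ** A = 0"
      using vector_derivative_unique_at[OF dC dC0] by (simp add: algebra_simps)
    have dPhi: "((\<lambda>s. Phi_map (X s) (P s)) has_vector_derivative
       (B ** transpose (X t) + P t ** transpose A - A ** transpose (P t) - X t ** transpose B)) (at t)"
    proof -
      have "((\<lambda>s. P s ** transpose (X s) - X s ** transpose (P s)) has_vector_derivative ((P t ** transpose A + B ** transpose (X t)) - (X t ** transpose B + A ** transpose (P t)))) (at t)"
        by (intro has_vector_derivative_diff der_mm der_tr dX dP)
      then show ?thesis unfolding Phi_map_def by (rule has_vector_derivative_eq_rhs) (simp add: algebra_simps)
    qed
    have dPsi: "((\<lambda>s. Psi_map (X s) (P s)) has_vector_derivative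
       (transpose A ** P t + transpose (X t) ** B - transpose B ** X t - transpose (P t) ** A)) (at t)"
    proof -
      have "((\<lambda>s. transpose (X s) ** P s - transpose (P s) ** X s) has_vector_derivative ((transpose (X t) ** B + transpose A ** P t) - (transpose (P t) ** A + transpose B ** X t))) (at t)"
        by (intro has_vector_derivative_diff der_mm der_tr dX dP)
      then show ?thesis unfolding Psi_map_def by (rule has_vector_derivative_eq_rhs) (simp add: algebra_simps)
    qed
    have L': "L \<longleftrightarrow> (A = P t - c *\<^sub>R (X t ** transpose (P t) ** X t) \<and>
         B = c *\<^sub>R (P t ** transpose (X t) ** P t) - \<Gamma>
                + X t ** ((1/2) *\<^sub>R (- 2 *\<^sub>R (transpose (P t) ** P t)
                     + transpose (X t) ** \<Gamma> + transpose \<Gamma> ** X t)))"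
      unfolding L c_def by (simp only: hvd_iff2[OF dX] hvd_iff2[OF dP])
    have R': "R \<longleftrightarrow> (A = Phi_map (X t) (P t) ** X t + \<kappa> *\<^sub>R (X t ** Psi_map (X t) (P t)) \<and>
        B ** transpose (X t) + P t ** transpose A - A ** transpose (P t) - X t ** transpose B
          = X t ** transpose \<Gamma> - \<Gamma> ** transpose (X t) \<and>
        transpose A ** P t + transpose (X t) ** B - transpose B ** X t - transpose (P t) ** A
          = transpose \<Gamma> ** X t - transpose (X t) ** \<Gamma>)"
      unfolding R by (simp only: hvd_iff2[OF dX] hvd_iff2[OF dPhi] hvd_iff2[OF dPsi])
    show ?thesis
      unfolding L' R'
      using fwd[OF h1 h2 c_def, of A B \<Gamma>] bwd[OF h1 h2 h4 c_def, of \<Gamma>] by blast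
  qed
  show ?thesis
    apply (rule ball_cong[OF refl])
    apply (rule pt)
    apply assumption
    apply (rule refl)+
    done
qed

end
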